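(* Let $x\in S_n$ with $x_i>x_{i+1}$, and let $y$ be obtained from $x$ by transposing $x_i$ and $x_{i+1}$, so that $x$ covers $y$ in the weak order. Then a lattice congruence $\Theta$ on $S_n$ contracts the edge $y\lessdot x$ (i.e. $x\equiv y$) if and only if it contracts the join-irreducible $\lambda(x,i)$.
   Context: $S_n$: permutations of $[n]$ in one-line notation with the right weak order ($x\le y$ iff the set of inverted value pairs of $x$ is contained in that of $y$), a lattice. A join-irreducible $\gamma$ covers exactly one element $\gamma_*$; $\Theta$ contracts $\gamma$ if $\gamma\equiv\gamma_*$. For $x$ with $x_i>x_{i+1}$, set $A(x,i)=\{x_j:1\le j\le i,\ x_j>x_i\}\cup\{x_j:i+1\le j\le n,\ x_j\ge x_{i+1}\}$, and let $\lambda(x,i)$ be the permutation consisting of the elements of $[n]\setminus A(x,i)$ in increasing order followed by the elements of $A(x,i)$ in increasing order; it is join-irreducible. *)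

theory Defs
  imports Main
begin

definition perms :: "nat \<Rightarrow> nat list set" where
  "perms n = {xs. distinct xs \<and> set xs = {1..n}}"

definition inversions :: "nat list \<Rightarrow> (nat \<times> nat) set" where
  "inversions xs = {(a, b). a < b \<and>
     (\<exists>i j. i < j \<and> j < length xs \<and> xs ! i = b \<and> xs ! j = a)}"

definition weak_le :: "nat list \<Rightarrow> nat list \<Rightarrow> bool" where
  "weak_le x y \<longleftrightarrow> inversions x \<subseteq> inversions y"

definition weak_join :: "nat \<Rightarrow> nat list \<Rightarrow> nat list \<Rightarrow> nat list" where
  "weak_join n x y = (THE z. z \<in> perms n \<and> weak_le x z \<and> weak_le y z \<and>
     (\<forall>w\<in>perms n. weak_le x w \<and> weak_le y w \<longrightarrow> weak_le z w))"

definition weak_meet :: "nat \<Rightarrow> nat list \<Rightarrow> nat list \<Rightarrow> nat list" where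
  "weak_meet n x y = (THE z. z \<in> perms n \<and> weak_le z x \<and> weak_le z y \<and>
     (\<forall>w\<in>perms n. weak_le w x \<and> weak_le w y \<longrightarrow> weak_le w z))"

definition lattice_congruence :: "nat \<Rightarrow> (nat list \<times> nat list) set \<Rightarrow> bool" where
  "lattice_congruence n \<Theta> \<longleftrightarrow> equiv (perms n) \<Theta> \<and>
     (\<forall>x y z. (x, y) \<in> \<Theta> \<longrightarrow> z \<in> perms n \<longrightarrow>
        (weak_join n x z, weak_join n y z) \<in> \<Theta> \<and>
        (weak_meet n x z, weak_meet n y z) \<in> \<Theta>)"

definition weak_covers :: "nat \<Rightarrow> nat list \<Rightarrow> nat list \<Rightarrow> bool" where
  "weak_covers n x y \<longleftrightarrow> x \<in> perms n \<and> y \<in> perms n \<and> weak_le y x \<and> x \<noteq> y \<and>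
     \<not> (\<exists>z\<in>perms n. weak_le y z \<and> weak_le z x \<and> z \<noteq> y \<and> z \<noteq> x)"

definition join_irreducible :: "nat \<Rightarrow> nat list \<Rightarrow> bool" where
  "join_irreducible n g \<longleftrightarrow> g \<in> perms n \<and> (\<exists>!h. weak_covers n g h)"

text \<open>The unique element covered by a join-irreducible.\<close>
definition lower_cover :: "nat \<Rightarrow> nat list \<Rightarrow> nat list" where
  "lower_cover n g = (THE h. weak_covers n g h)"

definition contracts :: "nat \<Rightarrow> (nat list \<times> nat list) set \<Rightarrow> nat list \<Rightarrow> bool" where
  "contracts n \<Theta> g \<longleftrightarrow> (g, lower_cover n g) \<in> \<Theta>"

text \<open>A(x,i), with 0-based position k (paper's i = k+1).\<close>
definition A_set :: "nat list \<Rightarrow> nat \<Rightarrow> nat set" where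
  "A_set x k = {x ! j | j. j \<le> k \<and> x ! j > x ! k}
             \<union> {x ! j | j. k + 1 \<le> j \<and> j < length x \<and> x ! j \<ge> x ! (k + 1)}"

definition lam :: "nat list \<Rightarrow> nat \<Rightarrow> nat list" where
  "lam x k = sorted_list_of_set ({1..length x} - A_set x k) @ sorted_list_of_set (A_set x k)"

end

theory Submission
  imports Defs
begin

definition bef :: "nat list \<Rightarrow> nat \<Rightarrow> nat \<Rightarrow> bool" where
  "bef xs s t \<longleftrightarrow> (\<exists>i j. i < j \<and> j < length xs \<and> xs ! i = s \<and> xs ! j = t)"

lemma inv_bef: "inversions xs = {(a, b). a < b \<and> bef xs b a}"
  unfolding inversions_def bef_def by auto

lemma bef_Nil[simp]: "\<not> bef [] s t"
  unfolding bef_def by auto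

lemma bef_Cons[simp]: "bef (u # l) s t \<longleftrightarrow> (s = u \<and> t \<in> set l) \<or> bef l s t"
proof
  assume "bef (u # l) s t"
  then obtain i j where ij: "i < j" "j < length (u # l)" "(u # l) ! i = s" "(u # l) ! j = t"
    unfolding bef_def by blast
  show "(s = u \<and> t \<in> set l) \<or> bef l s t"
  proof (cases i)
    case 0
    then have "s = u" using ij by simp
    moreover have "t \<in> set l" using ij by (cases j) auto
    ultimately show ?thesis by simp
  next
    case (Suc i')
    then obtain j' where "j = Suc j'" using ij by (cases j) auto
    then have "bef l s t" unfolding bef_def using ij Suc
      by (intro exI[of _ i'] exI[of _ j']) auto
    then show ?thesis by simp
  qed
next
  assume "(s = u \<and> t \<in> set l) \<or> bef l s t"
  then show "bef (u # l) s t"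
  proof
    assume "s = u \<and> t \<in> set l"
    then obtain j where "j < length l" "l ! j = t" "s = u" by (auto simp: in_set_conv_nth)
    then show ?thesis unfolding bef_def by (intro exI[of _ 0] exI[of _ "Suc j"]) auto
  next
    assume "bef l s t"
    then obtain i j where "i < j" "j < length l" "l ! i = s" "l ! j = t" unfolding bef_def by blast
    then show ?thesis unfolding bef_def by (intro exI[of _ "Suc i"] exI[of _ "Suc j"]) auto
  qed
qed

lemma bef_set: "bef l s t \<Longrightarrow> s \<in> set l \<and> t \<in> set l"
  by (induction l) auto

lemma bef_append: "bef (l1 @ l2) s t \<longleftrightarrow> bef l1 s t \<or> bef l2 s t \<or> (s \<in> set l1 \<and> t \<in> set l2)"
  by (induction l1) auto

lemma bef_sorted: "sorted_wrt (<) l \<Longrightarrow> bef l s t \<longleftrightarrow> s \<in> set l \<and> t \<in> set l \<and> s < t"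
  by (induction l) (auto dest: bef_set)

lemma bef_asym: "distinct l \<Longrightarrow> bef l s t \<Longrightarrow> \<not> bef l t s"
  by (induction l) (auto dest: bef_set)

lemma bef_total: "s \<in> set l \<Longrightarrow> t \<in> set l \<Longrightarrow> s \<noteq> t \<Longrightarrow> bef l s t \<or> bef l t s"
  by (induction l) auto

lemma bef_trans: "distinct l \<Longrightarrow> bef l s t \<Longrightarrow> bef l t r \<Longrightarrow> bef l s r"
  by (induction l) (auto dest: bef_set)

lemma bef_eq: "distinct xs \<Longrightarrow> distinct ys \<Longrightarrow> set xs = set ys \<Longrightarrow> (\<forall>s t. bef xs s t = bef ys s t) \<Longrightarrow> xs = ys"
proof (induction xs arbitrary: ys)
  case Nil then show ?case by simp
next
  case (Cons u xs)
  then obtain w ys' where ys: "ys = w # ys'" by (cases ys) auto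
  have "u = w"
  proof (rule ccontr)
    assume "u \<noteq> w"
    then have "u \<in> set ys'" using Cons.prems ys by auto
    then have "bef ys w u" using ys by simp
    then have "bef (u # xs) w u" using Cons.prems(4) by metis
    then show False using Cons.prems \<open>u \<noteq> w\<close> by (auto dest: bef_set)
  qed
  have "\<forall>s t. bef xs s t = bef ys' s t"
  proof (intro allI)
    fix s t
    show "bef xs s t = bef ys' s t"
    proof (cases "s = u")
      case True
      then show ?thesis using Cons.prems ys \<open>u = w\<close> by (auto dest: bef_set)
    next
      case False
      then show ?thesis using Cons.prems(4) ys \<open>u = w\<close>
        by (metis bef_Cons)
    qed
  qed
  moreover have "set xs = set ys'" using Cons.prems ys \<open>u = w\<close> by auto
  ultimately show ?case using Cons ys \<open>u = w\<close> by simp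
qed

lemma inv_inj:
  assumes "x \<in> perms n" "z \<in> perms n" "inversions x = inversions z"
  shows "x = z"
proof (rule bef_eq)
  show "distinct x" "distinct z" "set x = set z" using assms by (auto simp: perms_def)
  show "\<forall>s t. bef x s t = bef z s t"
  proof (intro allI)
    fix s t
    have dx: "distinct x" and dz: "distinct z" and sx: "set x = set z" using assms by (auto simp: perms_def)
    show "bef x s t = bef z s t"
    proof (cases "s \<in> set x \<and> t \<in> set x \<and> s \<noteq> t")
      case True
      have e: "\<And>a b. (a < b \<and> bef x b a) = (a < b \<and> bef z b a)"
        using assms(3) unfolding inv_bef by (auto simp: set_eq_iff)
      show ?thesis
      proof (cases "s < t")
        case True
        then show ?thesis using e[of s t] bef_total[of s x t] bef_total[of s z t] bef_asym[OF dx] bef_asym[OF dz]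
          \<open>s \<in> set x \<and> t \<in> set x \<and> s \<noteq> t\<close> sx by blast
      next
        case False
        then have "t < s" using True by simp
        then show ?thesis using e[of t s] by blast
      qed
    next
      case False
      then show ?thesis using sx bef_asym[OF dx, of s t] bef_asym[OF dz, of s t] bef_set[of x s t] bef_set[of z s t] by auto
    qed
  qed
qed

lemma swap_inv:
  assumes "distinct (P @ u # v # Q)" "v < u"
  shows "inversions (P @ u # v # Q) = insert (v, u) (inversions (P @ v # u # Q))"
    "(v, u) \<notin> inversions (P @ v # u # Q)"
  using assms unfolding inv_bef by (auto simp: bef_append dest: bef_set)


lemma join_eqI:
  assumes "z \<in> perms n" "weak_le p z" "weak_le q z"
    "\<forall>w\<in>perms n. weak_le p w \<and> weak_le q w \<longrightarrow> weak_le z w"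
  shows "weak_join n p q = z"
  unfolding weak_join_def
proof (rule the_equality)
  show "z \<in> perms n \<and> weak_le p z \<and> weak_le q z \<and>
     (\<forall>w\<in>perms n. weak_le p w \<and> weak_le q w \<longrightarrow> weak_le z w)" using assms by blast
  fix z' assume h: "z' \<in> perms n \<and> weak_le p z' \<and> weak_le q z' \<and>
     (\<forall>w\<in>perms n. weak_le p w \<and> weak_le q w \<longrightarrow> weak_le z' w)"
  then have "inversions z' = inversions z" using assms unfolding weak_le_def by blast
  then show "z' = z" using inv_inj h assms(1) by blast
qed

lemma meet_eqI:
  assumes "z \<in> perms n" "weak_le z p" "weak_le z q"
    "\<forall>w\<in>perms n. weak_le w p \<and> weak_le w q \<longrightarrow> weak_le w z"
  shows "weak_meet n p q = z"
  unfolding weak_meet_def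
proof (rule the_equality)
  show "z \<in> perms n \<and> weak_le z p \<and> weak_le z q \<and>
     (\<forall>w\<in>perms n. weak_le w p \<and> weak_le w q \<longrightarrow> weak_le w z)" using assms by blast
  fix z' assume h: "z' \<in> perms n \<and> weak_le z' p \<and> weak_le z' q \<and>
     (\<forall>w\<in>perms n. weak_le w p \<and> weak_le w q \<longrightarrow> weak_le w z')"
  then have "inversions z' = inversions z" using assms unfolding weak_le_def by blast
  then show "z' = z" using inv_inj h assms(1) by blast
qed

lemma abstract_part:
  assumes xP: "x \<in> perms n" and yP: "y \<in> perms n" and JP: "J \<in> perms n" and JsP: "Js \<in> perms n"
    and ix: "inversions x = insert (b, a) (inversions y)" "(b, a) \<notin> inversions y"
    and iJ: "inversions J = insert (b, a) (inversions Js)" "(b, a) \<notin> inversions Js"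
    and Jx: "inversions J \<subseteq> inversions x"
    and F5: "\<forall>h\<in>perms n. (b, a) \<in> inversions h \<and> inversions h \<subseteq> inversions J \<longrightarrow> inversions h = inversions J"
    and LC: "lattice_congruence n \<Theta>"
  shows "(x, y) \<in> \<Theta> \<longleftrightarrow> contracts n \<Theta> J"
proof -
  have "inversions Js \<subseteq> inversions x" using iJ(1) Jx by auto
  then have Jsy: "inversions Js \<subseteq> inversions y" using ix iJ(2) by auto
  have cov: "weak_covers n J Js"
    unfolding weak_covers_def weak_le_def
  proof (intro conjI)
    show "J \<noteq> Js" using iJ by auto
    show "\<not> (\<exists>z\<in>perms n. inversions Js \<subseteq> inversions z \<and> inversions z \<subseteq> inversions J \<and> z \<noteq> Js \<and> z \<noteq> J)"
    proof
      assume "\<exists>z\<in>perms n. inversions Js \<subseteq> inversions z \<and> inversions z \<subseteq> inversions J \<and> z \<noteq> Js \<and> z \<noteq> J"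
      then obtain z where z: "z \<in> perms n" "inversions Js \<subseteq> inversions z" "inversions z \<subseteq> inversions J" "z \<noteq> Js" "z \<noteq> J"
        by blast
      have "inversions z = inversions Js \<or> inversions z = inversions J"
      proof (cases "(b, a) \<in> inversions z")
        case True
        then have "inversions J \<subseteq> inversions z" using z(2) iJ(1) by auto
        then show ?thesis using z(3) by auto
      next
        case False
        then have "inversions z \<subseteq> inversions Js" using z(3) iJ(1) by auto
        then show ?thesis using z(2) by auto
      qed
      then show False using z inv_inj JP JsP by metis
    qed
  qed (use JP JsP iJ in auto)
  have uniq: "h = Js" if "weak_covers n J h" for h
  proof -
    have h: "h \<in> perms n" "inversions h \<subseteq> inversions J" "h \<noteq> J"
      and nb: "\<not> (\<exists>z\<in>perms n. weak_le h z \<and> weak_le z J \<and> z \<noteq> h \<and> z \<noteq> J)"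
      using that unfolding weak_covers_def weak_le_def by auto
    have "(b, a) \<notin> inversions h"
    proof
      assume "(b, a) \<in> inversions h"
      then have "inversions h = inversions J" using F5 h by blast
      then show False using inv_inj h JP by metis
    qed
    then have "weak_le h Js" using h(2) iJ(1) unfolding weak_le_def by auto
    moreover have "weak_le Js J" using iJ unfolding weak_le_def by blast
    moreover have "Js \<noteq> J" using iJ by auto
    ultimately show "h = Js" using nb JsP by blast
  qed
  have lc: "lower_cover n J = Js"
    unfolding lower_cover_def using cov uniq by (rule the_equality)
  have m1: "weak_meet n x J = J"
    by (rule meet_eqI) (use JP Jx in \<open>auto simp: weak_le_def\<close>)
  have m2: "weak_meet n y J = Js"
  proof (rule meet_eqI)
    show "\<forall>w\<in>perms n. weak_le w y \<and> weak_le w J \<longrightarrow> weak_le w Js"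
      using ix(2) iJ(1) unfolding weak_le_def by auto
  qed (use JsP Jsy iJ in \<open>auto simp: weak_le_def\<close>)
  have j1: "weak_join n J y = x"
  proof (rule join_eqI)
    show "\<forall>w\<in>perms n. weak_le J w \<and> weak_le y w \<longrightarrow> weak_le x w"
      using ix iJ unfolding weak_le_def by blast
  qed (use xP Jx ix in \<open>auto simp: weak_le_def\<close>)
  have j2: "weak_join n Js y = y"
    by (rule join_eqI) (use yP Jsy in \<open>auto simp: weak_le_def\<close>)
  show ?thesis
  proof
    assume "(x, y) \<in> \<Theta>"
    then have "(weak_meet n x J, weak_meet n y J) \<in> \<Theta>" using LC JP unfolding lattice_congruence_def by blast
    then show "contracts n \<Theta> J" unfolding contracts_def lc m1 m2 .
  next
    assume "contracts n \<Theta> J"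
    then have "(J, Js) \<in> \<Theta>" unfolding contracts_def lc .
    then have "(weak_join n J y, weak_join n Js y) \<in> \<Theta>" using LC yP unfolding lattice_congruence_def by blast
    then show "(x, y) \<in> \<Theta>" unfolding j1 j2 .
  qed
qed


theorem proposition6p4:
  fixes n k :: nat and x y :: "nat list" and \<Theta> :: "(nat list \<times> nat list) set"
  assumes "x \<in> perms n"
    and "k + 1 < n"
    and "x ! k > x ! (k + 1)"
    and "y = x[k := x ! (k + 1), k + 1 := x ! k]"
    and "lattice_congruence n \<Theta>"
  shows "(x, y) \<in> \<Theta> \<longleftrightarrow> contracts n \<Theta> (lam x k)"
proof -
  have dx: "distinct x" and sx: "set x = {1..n}" using assms(1) by (auto simp: perms_def)
  have lx: "length x = n" using dx sx by (metis card_atLeastAtMost diff_Suc_1 distinct_card)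
  define a where "a = x ! k"
  define b where "b = x ! (k + 1)"
  have ba: "b < a" using assms(3) unfolding a_def b_def by simp
  define A where "A = A_set x k"
  define Ac where "Ac = {1..n} - A"
  have memA: "c \<in> A \<longleftrightarrow> (\<exists>j. (j \<le> k \<and> x ! j > a \<and> c = x ! j) \<or> (k + 1 \<le> j \<and> j < n \<and> x ! j \<ge> b \<and> c = x ! j))" for c
    unfolding A_def A_set_def a_def b_def lx by blast
  have xin: "x ! j \<in> {1..n}" if "j < n" for j using that sx lx by (metis nth_mem)
  have Asub: "A \<subseteq> {1..n}"
  proof
    fix c assume "c \<in> A"
    then obtain j where j: "(j \<le> k \<and> x ! j > a \<and> c = x ! j) \<or> (k + 1 \<le> j \<and> j < n \<and> x ! j \<ge> b \<and> c = x ! j)"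
      unfolding memA by blast
    then have "j < n" "c = x ! j" using assms(2) by auto
    then show "c \<in> {1..n}" using xin by simp
  qed
  have finA: "finite A" using Asub finite_subset by blast
  have bA: "b \<in> A" unfolding memA b_def using assms(2) by auto
  have aA: "a \<notin> A"
  proof
    assume "a \<in> A"
    then obtain j where j: "(j \<le> k \<and> x ! j > a \<and> a = x ! j) \<or> (k + 1 \<le> j \<and> j < n \<and> x ! j \<ge> b \<and> a = x ! j)"
      unfolding memA by blast
    then show False
    proof
      assume "j \<le> k \<and> x ! j > a \<and> a = x ! j" then show False by (metis less_irrefl)
    next
      assume h: "k + 1 \<le> j \<and> j < n \<and> x ! j \<ge> b \<and> a = x ! j"
      then have "x ! j = x ! k" unfolding a_def by simp
      then have "j = k" using dx h lx assms(2) by (simp add: nth_eq_iff_index_eq)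
      then show False using h by simp
    qed
  qed
  have a1n: "a \<in> {1..n}" unfolding a_def using xin assms(2) by simp
  have aAc: "a \<in> Ac" unfolding Ac_def using a1n aA by simp
  have minA: "b \<le> c" if "c \<in> A" for c
    using that ba unfolding memA by auto
  have maxAc: "d \<le> a" if "d \<in> Ac" for d
  proof (rule ccontr)
    assume "\<not> d \<le> a"
    then have da: "a < d" by simp
    from that have "d \<in> set x" unfolding Ac_def sx by simp
    then obtain i where i: "i < n" "x ! i = d" using lx by (auto simp: in_set_conv_nth)
    have "d \<in> A"
    proof (cases "i \<le> k")
      case True then show ?thesis unfolding memA using i da by blast
    next
      case False then show ?thesis unfolding memA using i da ba by (intro exI[of _ i]) auto
    qed
    then show False using that unfolding Ac_def by simp
  qed
  define L1 where "L1 = sorted_list_of_set Ac"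
  define L2 where "L2 = sorted_list_of_set A"
  have finAc: "finite Ac" unfolding Ac_def by simp
  have s1: "sorted_wrt (<) L1" "set L1 = Ac" "distinct L1" unfolding L1_def using finAc by (auto simp: strict_sorted_iff)
  have s2: "sorted_wrt (<) L2" "set L2 = A" "distinct L2" unfolding L2_def using finA by (auto simp: strict_sorted_iff)
  have J: "lam x k = L1 @ L2" unfolding lam_def L1_def L2_def Ac_def A_def lx ..
  have L1e: "L1 = butlast L1 @ [a]"
  proof -
    have ne: "L1 \<noteq> []" using s1 aAc by auto
    define m where "m = last L1"
    have e: "L1 = butlast L1 @ [m]" unfolding m_def using ne by simp
    have "m \<in> Ac" using ne s1 unfolding m_def by auto
    then have "m \<le> a" using maxAc by blast
    have "a = m"
    proof (rule ccontr)
      assume "a \<noteq> m"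
      then have "a \<in> set (butlast L1)" using aAc s1 e by (metis Un_iff empty_iff empty_set insert_iff list.set(2) set_append)
      then have "a < m" using s1(1) e by (metis sorted_wrt_append list.set_intros(1))
      then show False using \<open>m \<le> a\<close> by simp
    qed
    then show ?thesis using e by simp
  qed
  have L2e: "L2 = b # tl L2"
  proof -
    have ne: "L2 \<noteq> []" using s2 bA by auto
    define m where "m = hd L2"
    have e: "L2 = m # tl L2" unfolding m_def using ne by simp
    have "m \<in> A" using ne s2 unfolding m_def by auto
    then have "b \<le> m" using minA by blast
    have "b = m"
    proof (rule ccontr)
      assume "b \<noteq> m"
      then have "b \<in> set (tl L2)" using bA s2 e by (metis set_ConsD)
      then have "m < b" using s2(1) e by (metis sorted_wrt.simps(2))
      then show False using \<open>b \<le> m\<close> by simp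
    qed
    then show ?thesis using e by simp
  qed
  define P where "P = butlast L1"
  define Q where "Q = tl L2"
  define Js where "Js = P @ b # a # Q"
  have Jeq: "lam x k = P @ a # b # Q" unfolding J P_def Q_def using L1e L2e by (metis append.assoc append_Cons append_Nil)
  have dJ: "distinct (lam x k)" unfolding J using s1 s2 unfolding Ac_def by auto
  have sJ: "set (lam x k) = {1..n}" unfolding J using s1 s2 Asub unfolding Ac_def by auto
  have JP: "lam x k \<in> perms n" using dJ sJ by (simp add: perms_def)
  have JsP: "Js \<in> perms n" using dJ sJ unfolding Jeq Js_def perms_def by auto
  have iJ: "inversions (lam x k) = insert (b, a) (inversions Js)" "(b, a) \<notin> inversions Js"
    unfolding Jeq Js_def using swap_inv[of P a b Q] dJ ba unfolding Jeq by auto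
  define R where "R = drop (k + 2) x"
  have dr: "drop k x = a # b # R"
    unfolding a_def b_def R_def using assms(2) lx
    by (metis Cons_nth_drop_Suc Suc_eq_plus1 add_2_eq_Suc' add_lessD1)
  define T where "T = take k x"
  have xe: "x = T @ a # b # R" using dr unfolding T_def by (metis append_take_drop_id)
  have ltk: "length T = k" using assms(2) lx unfolding T_def by simp
  have ye: "y = T @ b # a # R"
  proof -
    have "y = x[k := b, k + 1 := a]" unfolding assms(4) a_def b_def by simp
    also have "... = (T @ a # b # R)[k := b, k + 1 := a]" using xe by simp
    also have "... = T @ b # a # R" using ltk by (simp add: list_update_append)
    finally show ?thesis .
  qed
  have dx': "distinct (T @ a # b # R)" using dx xe by simp
  have yP: "y \<in> perms n"
  proof -
    have "distinct y" using dx' unfolding ye by auto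
    moreover have "set y = set x" unfolding ye xe by auto
    ultimately show ?thesis using sx unfolding perms_def by simp
  qed
  have ix: "inversions x = insert (b, a) (inversions y)" "(b, a) \<notin> inversions y"
    unfolding xe ye using swap_inv[OF dx' ba] by simp_all
  have invJ: "inversions (lam x k) = {(c, d). c < d \<and> c \<in> A \<and> d \<in> Ac}"
  proof -
    have "bef (lam x k) d c \<longleftrightarrow> c \<in> A \<and> d \<in> Ac" if "c < d" for c d
      using that unfolding J bef_append bef_sorted[OF s1(1)] bef_sorted[OF s2(1)] s1(2) s2(2) Ac_def by auto
    then show ?thesis unfolding inv_bef by auto
  qed
  have Jx: "inversions (lam x k) \<subseteq> inversions x"
  proof
    fix p assume "p \<in> inversions (lam x k)"
    then obtain c d where p: "p = (c, d)" "c < d" "c \<in> A" "d \<in> Ac" unfolding invJ by blast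
    then have "d \<le> a" using maxAc by blast
    from p(3) obtain j where j: "(j \<le> k \<and> x ! j > a \<and> c = x ! j) \<or> (k + 1 \<le> j \<and> j < n \<and> x ! j \<ge> b \<and> c = x ! j)"
      unfolding memA by blast
    then have j2: "k + 1 \<le> j \<and> j < n \<and> x ! j \<ge> b \<and> c = x ! j" using p \<open>d \<le> a\<close> by auto
    from p(4) have "d \<in> set x" unfolding Ac_def sx by simp
    then obtain i where i: "i < n" "x ! i = d" using lx by (auto simp: in_set_conv_nth)
    have "i \<le> k"
    proof (rule ccontr)
      assume "\<not> i \<le> k"
      then have "d \<in> A" unfolding memA using i j2 p(2) by (intro exI[of _ i]) auto
      then show False using p(4) unfolding Ac_def by simp
    qed
    then have "bef x d c" unfolding bef_def using i j2 lx by (intro exI[of _ i] exI[of _ j]) auto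
    then show "p \<in> inversions x" unfolding inv_bef p using p(2) by simp
  qed
  have F5: "\<forall>h\<in>perms n. (b, a) \<in> inversions h \<and> inversions h \<subseteq> inversions (lam x k) \<longrightarrow> inversions h = inversions (lam x k)"
  proof (intro ballI impI)
    fix h assume hP: "h \<in> perms n" and h: "(b, a) \<in> inversions h \<and> inversions h \<subseteq> inversions (lam x k)"
    have dh: "distinct h" and sh: "set h = {1..n}" using hP by (auto simp: perms_def)
    have hsub: "inversions h \<subseteq> inversions (lam x k)" and hba: "(b, a) \<in> inversions h" using h by blast+
    have sub: "c \<in> A \<and> d \<in> Ac" if "c < d" "bef h d c" for c d
    proof -
      have "(c, d) \<in> inversions h" unfolding inv_bef using that by simp
      then have "(c, d) \<in> inversions (lam x k)" using hsub by blast
      then show ?thesis unfolding invJ by simp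
    qed
    have hab: "bef h a b" using hba unfolding inv_bef by simp
    show "inversions h = inversions (lam x k)"
    proof
      show "inversions h \<subseteq> inversions (lam x k)" using hsub .
      show "inversions (lam x k) \<subseteq> inversions h"
      proof
        fix p assume "p \<in> inversions (lam x k)"
        then obtain c d where p: "p = (c, d)" "c < d" "c \<in> A" "d \<in> Ac" unfolding invJ by blast
        have cin: "c \<in> set h" and din: "d \<in> set h" using p Asub sh unfolding Ac_def by auto
        have "bef h d c"
        proof (rule ccontr)
          assume "\<not> bef h d c"
          then have cd: "bef h c d" using bef_total[OF cin din] p(2) by auto
          have bc: "b = c \<or> bef h b c"
          proof (cases "b = c")
            case False
            then have "b < c" using minA p(3) by force
            moreover have "\<not> bef h c b" using sub[of b c] p(3) \<open>b < c\<close> unfolding Ac_def by blast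
            moreover have "b \<in> set h" using bA Asub sh by auto
            ultimately show ?thesis using bef_total[OF _ cin, of b] by auto
          qed simp
          have da: "d = a \<or> bef h d a"
          proof (cases "d = a")
            case False
            then have "d < a" using maxAc p(4) by force
            moreover have "\<not> bef h a d" using sub[of d a] p(4) \<open>d < a\<close> unfolding Ac_def by blast
            moreover have "a \<in> set h" using a1n sh by auto
            ultimately show ?thesis using bef_total[OF din, of a] by auto
          qed simp
          have "bef h b a" using bc cd da bef_trans[OF dh] by metis
          then show False using hab bef_asym[OF dh] by blast
        qed
        then show "p \<in> inversions h" unfolding inv_bef p using p(2) by simp
      qed
    qed
  qed
  show ?thesis
    by (rule abstract_part[OF assms(1) yP JP JsP ix iJ Jx F5 assms(5)])
qed

end
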